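(* Let $f\colon[0,1]\to\mathbb{R}_{\ge 0}$ be Riemann-integrable, let $\delta\in(0,1)$ and $0<\beta<\alpha\le 1$. Assume $\int_0^1(1-\theta^\alpha) f(\theta)\,\mathrm{d}\theta>0$. Then $$\frac{\int_0^\delta (1-\theta^\alpha) f(\theta)\,\mathrm{d}\theta}{\int_0^1 (1-\theta^\alpha) f(\theta)\,\mathrm{d}\theta}\ \le\ \frac{\int_0^\delta (1-\theta^\beta) f(\theta)\,\mathrm{d}\theta}{\int_0^1 (1-\theta^\beta) f(\theta)\,\mathrm{d}\theta}.$$ *)

theory Defs
  imports "HOL-Analysis.Analysis"
begin

definition riemann_integrable_on :: "(real \<Rightarrow> real) \<Rightarrow> real \<Rightarrow> real \<Rightarrow> bool" where
  "riemann_integrable_on f a b \<longleftrightarrow>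
     (\<exists>I. \<forall>\<epsilon>>0. \<exists>d>0. \<forall>(n::nat) (x::nat \<Rightarrow> real) (t::nat \<Rightarrow> real).
        (n > 0 \<and> x 0 = a \<and> x n = b \<and>
         (\<forall>i<n. x i < x (Suc i) \<and> x (Suc i) - x i < d \<and> x i \<le> t i \<and> t i \<le> x (Suc i)))
        \<longrightarrow> \<bar>(\<Sum>i<n. f (t i) * (x (Suc i) - x i)) - I\<bar> < \<epsilon>)"

end

theory Submission imports Defs begin
lemma tangent:
  fixes w v r :: real
  assumes "0 \<le> w" "0 < v" "0 < r" "r < 1"
  shows "w powr r \<le> (1-r) * v powr r + r * v powr (r-1) * w"
proof (cases "w = 0")
  case True thus ?thesis using assms by simp
next
  case False
  hence w: "w > 0" using assms by simp
  have Y: "w powr r * v powr (1 - r) \<le> r * w + (1 - r) * v"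
    by (rule Youngs_inequality_0) (use assms w in auto)
  have p: "0 \<le> v powr (r-1)" by simp
  have Y2: "(w powr r * v powr (1 - r)) * v powr (r-1) \<le> (r * w + (1 - r) * v) * v powr (r-1)"
    using mult_right_mono[OF Y p] .
  have e1: "v powr (1-r) * v powr (r-1) = 1" using powr_add[of v "1-r" "r-1"] assms by simp
  have e2: "v * v powr (r-1) = v powr r" using powr_add[of v 1 "r-1"] assms by simp
  have l: "(w powr r * v powr (1 - r)) * v powr (r-1) = w powr r"
    by (metis e1 mult.assoc mult.right_neutral)
  have rr: "(r * w + (1 - r) * v) * v powr (r-1) = (1-r) * (v * v powr (r-1)) + r * v powr (r-1) * w"
    by (simp add: algebra_simps)
  show ?thesis using Y2 l rr e2 by simp
qed
lemma key:
  fixes u v r :: real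
  assumes "0 \<le> u" "u \<le> v" "0 < v" "v < 1" "0 < r" "r < 1"
  shows "(1 - v powr r)*(1-u) \<le> (1 - u powr r)*(1-v)"
proof -
  define s where "s = r * v powr (r-1)"
  have T1: "1 \<le> (1-r) * v powr r + s" using tangent[of 1 v r] assms by (simp add: s_def)
  have Tu: "u powr r \<le> (1-r) * v powr r + s * u" using tangent[of u v r] assms by (simp add: s_def)
  have vv: "v * v powr (r-1) = v powr r" using powr_add[of v 1 "r-1"] assms by simp
  have sv: "s * v = r * v powr r" using vv by (simp add: s_def algebra_simps)
  have a: "1 - v powr r \<le> s*(1-v)" using T1 sv by (simp add: algebra_simps)
  have b: "1 - u powr r \<ge> (1 - v powr r) + s*(v-u)" using Tu sv by (simp add: algebra_simps)
  have "(1 - u powr r)*(1-v) \<ge> ((1 - v powr r) + s*(v-u))*(1-v)"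
    using b assms by (intro mult_right_mono) auto
  moreover have "((1 - v powr r) + s*(v-u))*(1-v) = (1 - v powr r)*(1-v) + (s*(1-v))*(v-u)" by (simp add: algebra_simps)
  moreover have "(s*(1-v))*(v-u) \<ge> (1 - v powr r)*(v-u)"
    using a assms by (intro mult_right_mono) auto
  moreover have "(1 - v powr r)*(1-v) + (1 - v powr r)*(v-u) = (1 - v powr r)*(1-u)" by (simp add: algebra_simps)
  ultimately show ?thesis by linarith
qed

lemma key2:
  fixes x y \<alpha> \<beta> :: real
  assumes "0 \<le> x" "x \<le> y" "0 < y" "y < 1" "0 < \<beta>" "\<beta> < \<alpha>"
  shows "(1 - y powr \<beta>)*(1 - x powr \<alpha>) \<le> (1 - x powr \<beta>)*(1 - y powr \<alpha>)"
proof -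
  have a: "0 < \<alpha>" using assms by simp
  have "x powr \<alpha> \<le> y powr \<alpha>" using assms a by (intro powr_mono2) auto
  moreover have "y powr \<alpha> < 1" using powr_less_mono2[of \<alpha> y 1] assms a by simp
  moreover have "0 < y powr \<alpha>" using assms by simp
  moreover have "0 < \<beta>/\<alpha>" "\<beta>/\<alpha> < 1" using assms a by auto
  ultimately have "(1 - (y powr \<alpha>) powr (\<beta>/\<alpha>))*(1 - x powr \<alpha>) \<le> (1 - (x powr \<alpha>) powr (\<beta>/\<alpha>))*(1 - y powr \<alpha>)"
    by (intro key) auto
  moreover have "(y powr \<alpha>) powr (\<beta>/\<alpha>) = y powr \<beta>" "(x powr \<alpha>) powr (\<beta>/\<alpha>) = x powr \<beta>"
    using a by (simp_all add: powr_powr)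
  ultimately show ?thesis by simp
qed

theorem lemma4:
  fixes f :: "real \<Rightarrow> real" and \<delta> \<alpha> \<beta> :: real
  assumes "riemann_integrable_on f 0 1"
    and "\<And>\<theta>. \<theta> \<in> {0..1} \<Longrightarrow> f \<theta> \<ge> 0"
    and "0 < \<delta>" "\<delta> < 1"
    and "0 < \<beta>" "\<beta> < \<alpha>" "\<alpha> \<le> 1"
    and "integral {0..1} (\<lambda>\<theta>. (1 - \<theta> powr \<alpha>) * f \<theta>) > 0"
  shows "integral {0..\<delta>} (\<lambda>\<theta>. (1 - \<theta> powr \<alpha>) * f \<theta>)
           / integral {0..1} (\<lambda>\<theta>. (1 - \<theta> powr \<alpha>) * f \<theta>)
         \<le> integral {0..\<delta>} (\<lambda>\<theta>. (1 - \<theta> powr \<beta>) * f \<theta>)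
           / integral {0..1} (\<lambda>\<theta>. (1 - \<theta> powr \<beta>) * f \<theta>)"
proof -
  define A where "A = (\<lambda>\<theta>. (1 - \<theta> powr \<alpha>) * f \<theta>)"
  define B where "B = (\<lambda>\<theta>. (1 - \<theta> powr \<beta>) * f \<theta>)"
  define h where "h = (\<lambda>\<theta>::real. (1 - \<theta> powr \<beta>) / (1 - \<theta> powr \<alpha>))"
  have a0: "0 < \<alpha>" using assms by simp
  have fpos: "\<And>x. x \<in> {0..1} \<Longrightarrow> 0 \<le> f x" using assms(2) by blast
  have le1a: "\<And>x. x \<in> {0..1} \<Longrightarrow> x powr \<alpha> \<le> 1" using a0 by (intro powr_le1) auto
  have le1b: "\<And>x. x \<in> {0..1} \<Longrightarrow> x powr \<beta> \<le> 1" using assms by (intro powr_le1) auto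
  have lt1: "\<And>x. x \<in> {0..<1} \<Longrightarrow> x powr \<alpha> < 1" using powr_less_mono2[of \<alpha> _ 1] a0 by auto
  have Apos: "\<And>x. x \<in> {0..1} \<Longrightarrow> 0 \<le> A x" unfolding A_def using le1a fpos by simp
  have Bpos: "\<And>x. x \<in> {0..1} \<Longrightarrow> 0 \<le> B x" unfolding B_def using le1b fpos by simp
  have intA: "A integrable_on {0..1}"
    using assms(8) not_integrable_integral unfolding A_def by fastforce
  have absA: "A absolutely_integrable_on {0..1}"
    using intA Apos by (rule nonnegative_absolutely_integrable_1)
  have neg: "negligible {x \<in> {0..1} - {0..<1}. P x}" for P :: "real \<Rightarrow> bool"
    by (rule negligible_subset[of "{1}"]) auto
  have neg2: "negligible {x \<in> {0..<1} - {0..1::real}. P x}" for P :: "real \<Rightarrow> bool"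
    by (rule negligible_subset[of "{}"]) auto
  have absA': "A absolutely_integrable_on {0..<1}"
    using absA absolutely_integrable_spike_set_eq[OF neg neg2] by blast
  have hcont: "continuous_on {0..<1} h"
  proof -
    have ca: "continuous_on {0..<1} (\<lambda>\<theta>::real. \<theta> powr \<alpha>)"
      by (rule continuous_on_powr') (auto intro: continuous_intros simp: a0)
    have cb: "continuous_on {0..<1} (\<lambda>\<theta>::real. \<theta> powr \<beta>)"
      by (rule continuous_on_powr') (auto intro: continuous_intros simp: assms(5))
    have ne: "\<forall>x\<in>{0..<1}. 1 - x powr \<alpha> \<noteq> 0" using lt1 by fastforce
    show ?thesis unfolding h_def
      by (intro continuous_on_divide continuous_on_diff continuous_on_const ca cb ne)
  qed
  have hmeas: "h \<in> borel_measurable (lebesgue_on {0..<1})"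
    by (rule continuous_imp_measurable_on_sets_lebesgue[OF hcont]) auto
  have hb: "\<And>x. x \<in> {0..<1} \<Longrightarrow> 0 \<le> h x \<and> h x \<le> 1"
  proof -
    fix x :: real assume x: "x \<in> {0..<1}"
    have "x powr \<alpha> \<le> x powr \<beta>" using x assms by (intro powr_mono') auto
    moreover have "x powr \<beta> \<le> 1" using le1b x by auto
    ultimately show "0 \<le> h x \<and> h x \<le> 1" using lt1[OF x] unfolding h_def by (auto simp: divide_simps)
  qed
  have hbd: "bounded (h ` {0..<1})"
    unfolding bounded_iff using hb by (intro exI[of _ 1]) auto
  have "(\<lambda>x. h x * A x) absolutely_integrable_on {0..<1}"
    by (rule absolutely_integrable_bounded_measurable_product_real[OF hmeas _ hbd absA']) auto
  hence "(\<lambda>x. h x * A x) integrable_on {0..<1}" by (rule set_lebesgue_integral_eq_integral(1))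
  moreover have "\<And>x. x \<in> {0..<1} \<Longrightarrow> h x * A x = B x"
  proof -
    fix x :: real assume x: "x \<in> {0..<1}"
    have "1 - x powr \<alpha> \<noteq> 0" using lt1[OF x] by simp
    thus "h x * A x = B x" unfolding h_def A_def B_def by simp
  qed
  ultimately have "B integrable_on {0..<1}" by (rule integrable_eq)
  hence intB: "B integrable_on {0..1}"
    by (rule integrable_spike_set) (rule negligible_subset[of "{1}"]; auto)+
  define D where "D = 1 - \<delta> powr \<alpha>"
  define c where "c = (1 - \<delta> powr \<beta>) / D"
  have D0: "D > 0" unfolding D_def using lt1[of \<delta>] assms by auto
  have c0: "c > 0" unfolding c_def using D0 powr_less_mono2[of \<beta> \<delta> 1] assms by auto
  have intA1: "A integrable_on {0..\<delta>}" "A integrable_on {\<delta>..1}"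
    using intA assms by (auto intro: integrable_subinterval_real)
  have intB1: "B integrable_on {0..\<delta>}" "B integrable_on {\<delta>..1}"
    using intB assms by (auto intro: integrable_subinterval_real)
  have p1: "c * A x \<le> B x" if x: "x \<in> {0..\<delta>}" for x
  proof -
    have "(1 - \<delta> powr \<beta>)*(1 - x powr \<alpha>) \<le> (1 - x powr \<beta>)*D"
      unfolding D_def using x assms by (intro key2) auto
    hence "(1 - \<delta> powr \<beta>)*(1 - x powr \<alpha>) * f x \<le> (1 - x powr \<beta>)*D * f x"
      using fpos[of x] x assms by (intro mult_right_mono) auto
    hence "(1 - \<delta> powr \<beta>)*(1 - x powr \<alpha>) * f x / D \<le> (1 - x powr \<beta>)*D * f x / D"
      using D0 by (intro divide_right_mono) auto
    moreover have "(1 - x powr \<beta>)*D * f x / D = B x" unfolding B_def using D0 by simp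
    moreover have "(1 - \<delta> powr \<beta>)*(1 - x powr \<alpha>) * f x / D = c * A x"
      unfolding c_def A_def by simp
    ultimately show ?thesis by simp
  qed
  have p2: "B x \<le> c * A x" if x: "x \<in> {\<delta>..1}" for x
  proof (cases "x = 1")
    case True thus ?thesis unfolding A_def B_def by simp
  next
    case False
    have "(1 - x powr \<beta>)*(1 - \<delta> powr \<alpha>) \<le> (1 - \<delta> powr \<beta>)*(1 - x powr \<alpha>)"
      using x assms False by (intro key2) auto
    hence "(1 - x powr \<beta>)*D * f x \<le> (1 - \<delta> powr \<beta>)*(1 - x powr \<alpha>) * f x"
      using fpos[of x] x assms unfolding D_def by (intro mult_right_mono) auto
    hence "(1 - x powr \<beta>)*D * f x / D \<le> (1 - \<delta> powr \<beta>)*(1 - x powr \<alpha>) * f x / D"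
      using D0 by (intro divide_right_mono) auto
    moreover have "(1 - x powr \<beta>)*D * f x / D = B x" unfolding B_def using D0 by simp
    moreover have "(1 - \<delta> powr \<beta>)*(1 - x powr \<alpha>) * f x / D = c * A x"
      unfolding c_def A_def by simp
    ultimately show ?thesis by simp
  qed
  define Ad where "Ad = integral {0..\<delta>} A"
  define Ar where "Ar = integral {\<delta>..1} A"
  define Bd where "Bd = integral {0..\<delta>} B"
  define Br where "Br = integral {\<delta>..1} B"
  have A1: "integral {0..1} A = Ad + Ar" unfolding Ad_def Ar_def
    using Henstock_Kurzweil_Integration.integral_combine[of 0 \<delta> 1 A] assms intA by simp
  have B1: "integral {0..1} B = Bd + Br" unfolding Bd_def Br_def
    using Henstock_Kurzweil_Integration.integral_combine[of 0 \<delta> 1 B] assms intB by simp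
  have Ad0: "Ad \<ge> 0" unfolding Ad_def using intA1 Apos assms by (intro integral_nonneg) auto
  have Ar0: "Ar \<ge> 0" unfolding Ar_def using intA1 Apos assms by (intro integral_nonneg) auto
  have Bd0: "Bd \<ge> 0" unfolding Bd_def using intB1 Bpos assms by (intro integral_nonneg) auto
  have Br0: "Br \<ge> 0" unfolding Br_def using intB1 Bpos assms by (intro integral_nonneg) auto
  have q1: "c * Ad \<le> Bd" unfolding Ad_def Bd_def
    using integral_le[OF integrable_cmul[OF intA1(1), of c] intB1(1)] p1 by (simp add: integral_cmul)
  have q2: "Br \<le> c * Ar" unfolding Ar_def Br_def
    using integral_le[OF intB1(2) integrable_cmul[OF intA1(2), of c]] p2 by (simp add: integral_cmul)
  have Apos1: "Ad + Ar > 0" using assms(8) A1 unfolding A_def by simp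
  have goal: "Ad / (Ad + Ar) \<le> Bd / (Bd + Br)"
  proof (cases "Ad = 0")
    case True thus ?thesis using Bd0 Br0 by simp
  next
    case False
    hence "Ad > 0" using Ad0 by simp
    hence Bdp: "Bd > 0" using q1 c0 by (smt (verit) mult_pos_pos)
    have "Ad * Br \<le> Ad * (c * Ar)" using q2 Ad0 by (rule mult_left_mono)
    also have "... = (c * Ad) * Ar" by simp
    also have "... \<le> Bd * Ar" using q1 Ar0 by (rule mult_right_mono)
    finally have "Ad * Br \<le> Bd * Ar" .
    hence "Ad * (Bd + Br) \<le> Bd * (Ad + Ar)" by (simp add: algebra_simps)
    thus ?thesis using Apos1 Bdp Br0 by (simp add: divide_simps)
  qed
  show ?thesis using goal A1 B1 unfolding Ad_def Ar_def Bd_def Br_def A_def B_def by simp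
qed

end
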